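(* Let $\mathsf{B}\in\mathrm{IQC}(n,\mathbb{C})$. Then $\mathsf{B}$ admits an isotropic $2$-decomposition if and only if the period of $\mathsf{B}$ is even.
   Context: $\mathrm{D}(n,\mathbb{C})$ is the set of $n\times n$ positive semidefinite complex matrices of trace $1$. $\mathrm{IQC}(n,\mathbb{C})$ is the set of finite sets $\mathsf{B}\subseteq\mathrm{M}(n,\mathbb{C})$ with $\sum_{B\in\mathsf{B}}B^\dagger B=I$ such that $\rho\mapsto\sum_{B\in\mathsf{B}}B\rho B^\dagger$ has a unique fixed point in $\mathrm{D}(n,\mathbb{C})$, which is positive definite. An isotropic $2$-decomposition of $\mathsf{B}$ is an orthogonal direct sum decomposition $\mathbb{C}^n=U_1\oplus U_2$ into nonzero subspaces with $u^\dagger Bu'=0$ for all $u,u'\in U_i$, $B\in\mathsf{B}$, $i=1,2$. The period of $\mathsf{B}$ is the maximum integer $m$ for which there is an orthogonal direct sum decomposition $\mathbb{C}^n=U_1\oplus\cdots\oplus U_m$ into nonzero subspaces such that $B(U_{i-1})\le U_i$ for all $i\in[m]$ and all $B\in\mathsf{B}$, indices taken cyclically modulo $m$ in $[m]$. *)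

theory Defs
  imports "HOL-Analysis.Analysis"
begin

definition cinner :: "complex^'n \<Rightarrow> complex^'n \<Rightarrow> complex" where
  "cinner u v = (\<Sum>i\<in>UNIV. cnj (u$i) * v$i)"

definition adj :: "complex^'n^'n \<Rightarrow> complex^'n^'n" where
  "adj A = (\<chi> i j. cnj (A$j$i))"

definition ctrace :: "complex^'n^'n \<Rightarrow> complex" where
  "ctrace A = (\<Sum>i\<in>UNIV. A$i$i)"

definition psd :: "complex^'n^'n \<Rightarrow> bool" where
  "psd A \<longleftrightarrow> (\<forall>x. Im (cinner x (A *v x)) = 0 \<and> 0 \<le> Re (cinner x (A *v x)))"

definition posdef :: "complex^'n^'n \<Rightarrow> bool" where
  "posdef A \<longleftrightarrow> (\<forall>x. Im (cinner x (A *v x)) = 0 \<and> (x \<noteq> 0 \<longrightarrow> 0 < Re (cinner x (A *v x))))"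

definition density :: "(complex^'n^'n) set" where
  "density = {\<rho>. psd \<rho> \<and> ctrace \<rho> = 1}"

definition channel :: "(complex^'n^'n) set \<Rightarrow> complex^'n^'n \<Rightarrow> complex^'n^'n" where
  "channel Bs \<rho> = (\<Sum>B\<in>Bs. B ** \<rho> ** adj B)"

definition IQC :: "(complex^'n^'n) set \<Rightarrow> bool" where
  "IQC Bs \<longleftrightarrow> finite Bs \<and> (\<Sum>B\<in>Bs. adj B ** B) = mat 1
     \<and> (\<exists>!\<rho>. \<rho> \<in> density \<and> channel Bs \<rho> = \<rho>)
     \<and> (\<forall>\<rho>. \<rho> \<in> density \<and> channel Bs \<rho> = \<rho> \<longrightarrow> posdef \<rho>)"

definition csubspace :: "(complex^'n) set \<Rightarrow> bool" where
  "csubspace U \<longleftrightarrow> 0 \<in> U \<and> (\<forall>x\<in>U. \<forall>y\<in>U. x + y \<in> U) \<and> (\<forall>c. \<forall>x\<in>U. c *s x \<in> U)"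

definition orth_decomp :: "nat \<Rightarrow> (nat \<Rightarrow> (complex^'n) set) \<Rightarrow> bool" where
  "orth_decomp m U \<longleftrightarrow>
     (\<forall>i<m. csubspace (U i) \<and> U i \<noteq> {0}) \<and>
     (\<forall>i<m. \<forall>j<m. i \<noteq> j \<longrightarrow> (\<forall>u\<in>U i. \<forall>v\<in>U j. cinner u v = 0)) \<and>
     (\<forall>x. \<exists>u. (\<forall>i<m. u i \<in> U i) \<and> x = (\<Sum>i<m. u i))"

definition isotropic_2_decomp :: "(complex^'n^'n) set \<Rightarrow> bool" where
  "isotropic_2_decomp Bs \<longleftrightarrow> (\<exists>U. orth_decomp 2 U \<and>
     (\<forall>i<2. \<forall>u\<in>U i. \<forall>u'\<in>U i. \<forall>B\<in>Bs. cinner u (B *v u') = 0))"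

text \<open>Cyclic decomposition: B(U_{i-1}) <= U_i, indices mod m (here 0-based).\<close>
definition cyclic_decomp :: "(complex^'n^'n) set \<Rightarrow> nat \<Rightarrow> bool" where
  "cyclic_decomp Bs m \<longleftrightarrow> (\<exists>U. orth_decomp m U \<and>
     (\<forall>i<m. \<forall>B\<in>Bs. \<forall>u\<in>U i. B *v u \<in> U (Suc i mod m)))"

definition period :: "(complex^'n^'n) set \<Rightarrow> nat" where
  "period Bs = (GREATEST m. cyclic_decomp Bs m)"

end

theory Submission
  imports Defs
begin

lemma cinner_add_right: "cinner u (v + w) = cinner u v + cinner u w"
  by (simp add: cinner_def sum.distrib distrib_left)
lemma cinner_add_left: "cinner (u + v) w = cinner u w + cinner v w"
  by (simp add: cinner_def sum.distrib distrib_right)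
lemma cinner_diff_right: "cinner u (v - w) = cinner u v - cinner u w"
  by (simp add: cinner_def sum_subtractf right_diff_distrib)
lemma cinner_diff_left: "cinner (u - v) w = cinner u w - cinner v w"
  by (simp add: cinner_def sum_subtractf left_diff_distrib)
lemma cinner_neg_right: "cinner u (- v) = - cinner u v"
  by (simp add: cinner_def sum_negf)
lemma cinner_neg_left: "cinner (- u) v = - cinner u v"
  by (simp add: cinner_def sum_negf)
lemma cinner_scale_right: "cinner u (c *s v) = c * cinner u v"
  by (simp add: cinner_def sum_distrib_left mult_ac)
lemma cinner_scale_left: "cinner (c *s u) v = cnj c * cinner u v"
  by (simp add: cinner_def sum_distrib_left mult_ac)
lemma cinner_zero_right[simp]: "cinner u 0 = 0" by (simp add: cinner_def)
lemma cinner_zero_left[simp]: "cinner 0 u = 0" by (simp add: cinner_def)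
lemma cinner_sum_right: "finite A \<Longrightarrow> cinner u (\<Sum>i\<in>A. f i) = (\<Sum>i\<in>A. cinner u (f i))"
  by (induct A rule: finite_induct) (auto simp: cinner_add_right)
lemma cinner_sum_left: "finite A \<Longrightarrow> cinner (\<Sum>i\<in>A. f i) u = (\<Sum>i\<in>A. cinner (f i) u)"
  by (induct A rule: finite_induct) (auto simp: cinner_add_left)
lemma cinner_cnj: "cinner v u = cnj (cinner u v)"
  by (simp add: cinner_def mult_ac)
lemma cnj_mult_self: "cnj z * z = complex_of_real ((cmod z)^2)"
  by (subst complex_norm_square) (rule mult.commute)
lemma cinner_self: "cinner u u = complex_of_real (\<Sum>i\<in>UNIV. (cmod (u$i))^2)"
  by (simp add: cinner_def cnj_mult_self)
lemma cinner_self_Re_nonneg: "0 \<le> Re (cinner u u)"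
  by (simp add: cinner_self sum_nonneg)
lemma cinner_self_Im: "Im (cinner u u) = 0"
  by (simp add: cinner_self)
lemma cinner_self_eq_0[simp]: "cinner u u = 0 \<longleftrightarrow> u = 0"
proof
  assume "cinner u u = 0"
  hence "(\<Sum>i\<in>UNIV. (cmod (u$i))^2) = 0" by (metis cinner_self of_real_eq_0_iff)
  hence "\<forall>i\<in>UNIV. (cmod (u$i))^2 = 0" by (subst (asm) sum_nonneg_eq_0_iff) auto
  hence "\<forall>i. u$i = 0" by simp
  thus "u = 0" by (simp add: vec_eq_iff)
next
  assume "u = 0" thus "cinner u u = 0" by (simp only: cinner_zero_left)
qed

lemma cinner_adj: "cinner u (A *v v) = cinner (adj A *v u) v"
proof -
  have "cinner u (A *v v) = (\<Sum>i\<in>UNIV. \<Sum>j\<in>UNIV. cnj (u$i) * (A$i$j * v$j))"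
    by (simp add: cinner_def matrix_vector_mult_def sum_distrib_left)
  also have "\<dots> = (\<Sum>j\<in>UNIV. \<Sum>i\<in>UNIV. cnj (u$i) * (A$i$j * v$j))"
    by (rule sum.swap)
  also have "\<dots> = cinner (adj A *v u) v"
    by (simp add: cinner_def adj_def matrix_vector_mult_def sum_distrib_left sum_distrib_right mult_ac)
  finally show ?thesis .
qed


lemma cinner_adj': "cinner (A *v u) v = cinner u (adj A *v v)"
proof -
  have "cinner v (A *v u) = cinner (adj A *v v) u" by (rule cinner_adj)
  thus ?thesis by (metis cinner_cnj)
qed

lemma mv_scale: "A *v (c *s x) = c *s (A *v (x::complex^'n))"
  by (simp add: vec_eq_iff matrix_vector_mult_def sum_distrib_left mult_ac)
lemma mv_neg: "A *v (- x) = - (A *v (x::complex^'n))"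
  by (simp add: vec_eq_iff matrix_vector_mult_def sum_negf)
lemma mv_sum: "finite S \<Longrightarrow> A *v (\<Sum>i\<in>S. f i) = (\<Sum>i\<in>S. A *v f i)"
  by (induct S rule: finite_induct) (auto simp: matrix_vector_right_distrib)
lemma mv_sum_left: "finite S \<Longrightarrow> (\<Sum>i\<in>S. f i) *v x = (\<Sum>i\<in>S. f i *v x)"
  by (induct S rule: finite_induct) (auto simp: matrix_vector_mult_add_rdistrib)

lemma matrix_eqI: "(\<And>x. A *v x = B *v (x::complex^'n)) \<Longrightarrow> A = (B::complex^'n^'n)"
  by (simp add: matrix_eq)

lemma adj_adj[simp]: "adj (adj A) = A" by (simp add: adj_def vec_eq_iff)
lemma adj_add: "adj (A + B) = adj A + adj B" by (simp add: adj_def vec_eq_iff)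
lemma adj_diff: "adj (A - B) = adj A - adj B" by (simp add: adj_def vec_eq_iff)
lemma adj_mat: "adj (mat c) = mat (cnj c)" by (simp add: adj_def vec_eq_iff mat_def)
lemma adj_mult: "adj (A ** B) = adj B ** adj A"
  by (simp add: adj_def vec_eq_iff matrix_matrix_mult_def mult_ac)

lemma mat_mv: "mat c *v x = c *s (x::complex^'n)"
  by (simp add: vec_eq_iff matrix_vector_mult_def mat_def if_distrib if_distribR sum.delta cong: if_cong)
lemma mat_comm: "mat c ** A = A ** (mat c :: complex^'n^'n)"
  by (simp add: vec_eq_iff matrix_matrix_mult_def mat_def if_distrib if_distribR sum.delta sum.delta' mult_ac cong: if_cong)
lemma mat_mat: "mat a ** mat b = (mat (a*b) :: complex^'n^'n)"
  by (rule matrix_eqI) (simp add: matrix_vector_mul_assoc[symmetric] mat_mv vector_smult_assoc)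
lemma mat_add: "mat a + mat b = (mat (a+b) :: complex^'n^'n)"
  by (simp add: vec_eq_iff mat_def)
lemma mat_diff: "mat a - mat b = (mat (a-b) :: complex^'n^'n)"
  by (simp add: vec_eq_iff mat_def)
lemma mult_sum_left: "finite S \<Longrightarrow> A ** (\<Sum>i\<in>S. f i) = (\<Sum>i\<in>S. A ** f i)"
  by (induct S rule: finite_induct) (auto simp: matrix_add_ldistrib)
lemma mat_add_rdistrib: "(A + B) ** C = A ** C + B ** (C::complex^'n^'n)"
  by (simp add: vec_eq_iff matrix_matrix_mult_def sum.distrib distrib_right)
lemma mat_diff_rdistrib: "(A - B) ** C = A ** C - B ** (C::complex^'n^'n)"
  by (simp add: vec_eq_iff matrix_matrix_mult_def sum_subtractf left_diff_distrib)
lemma mat_diff_ldistrib: "C ** (A - B) = C ** A - C ** (B::complex^'n^'n)"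
  by (simp add: vec_eq_iff matrix_matrix_mult_def sum_subtractf right_diff_distrib)
lemma mult_sum_right: "finite S \<Longrightarrow> (\<Sum>i\<in>S. f i) ** A = (\<Sum>i\<in>S. f i ** (A::complex^'n^'n))"
  by (induct S rule: finite_induct) (auto simp: mat_add_rdistrib)

lemma kraus_norm:
  assumes "finite Bs" "(\<Sum>B\<in>Bs. adj B ** B) = mat 1"
  shows "(\<Sum>B\<in>Bs. cinner (B *v x) (B *v x)) = cinner x x"
proof -
  have "cinner x x = cinner x ((\<Sum>B\<in>Bs. adj B ** B) *v x)" using assms(2) by simp
  also have "\<dots> = (\<Sum>B\<in>Bs. cinner x ((adj B ** B) *v x))"
    using assms(1) by (simp add: mv_sum_left cinner_sum_right)
  also have "\<dots> = (\<Sum>B\<in>Bs. cinner (B *v x) (B *v x))"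
  proof (rule sum.cong)
    fix B assume "B \<in> Bs"
    have "cinner x ((adj B ** B) *v x) = cinner x (adj B *v (B *v x))"
      by (simp add: matrix_vector_mul_assoc)
    also have "\<dots> = cinner (B *v x) (B *v x)" using cinner_adj[of x "adj B" "B *v x"] by simp
    finally show "cinner x ((adj B ** B) *v x) = cinner (B *v x) (B *v x)" .
  qed simp
  finally show ?thesis by (rule sym)
qed

lemma kraus_nonzero:
  assumes "finite Bs" "(\<Sum>B\<in>Bs. adj B ** B) = mat 1" "x \<noteq> 0"
  shows "\<exists>B\<in>Bs. B *v x \<noteq> 0"
proof (rule ccontr)
  assume "\<not> ?thesis"
  hence "\<forall>B\<in>Bs. cinner (B *v x) (B *v x) = 0" by auto
  hence "(\<Sum>B\<in>Bs. cinner (B *v x) (B *v x)) = 0" by (intro sum.neutral) 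
  with kraus_norm[OF assms(1,2)] have "cinner x x = 0" by simp
  with assms(3) show False by (simp only: cinner_self_eq_0)
qed


lemma sum_single:
  assumes "finite A" "i \<in> A" "\<And>j. j \<in> A \<Longrightarrow> j \<noteq> i \<Longrightarrow> f j = 0"
  shows "sum f A = f i"
proof -
  have "sum f A = f i + sum f (A - {i})" using assms(1,2) by (simp add: sum.remove)
  moreover have "sum f (A - {i}) = 0" using assms(3) by (intro sum.neutral) auto
  ultimately show ?thesis by simp
qed

lemma sum_shift1:
  assumes "h p = h 0"
  shows "(\<Sum>i<p. h (Suc i)) = (\<Sum>i<p. h i)"
proof (cases p)
  case 0 thus ?thesis by simp
next
  case (Suc n)
  have "(\<Sum>i<Suc n. h (Suc i)) = (\<Sum>i<n. h (Suc i)) + h (Suc n)" by simp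
  moreover have "(\<Sum>i<Suc n. h i) = h 0 + (\<Sum>i<n. h (Suc i))" by (rule sum.lessThan_Suc_shift)
  ultimately show ?thesis using assms Suc by (simp add: add.commute)
qed

lemma sum_periodic_shift:
  fixes c :: nat
  assumes "\<And>k. h (k + p) = h k"
  shows "(\<Sum>i<p. h (i + c)) = (\<Sum>i<p. h i)"
proof (induct c)
  case 0 thus ?case by simp
next
  case (Suc c)
  have "(\<Sum>i<p. h (i + Suc c)) = (\<Sum>i<p. (\<lambda>j. h (j + c)) (Suc i))" by simp
  also have "\<dots> = (\<Sum>i<p. (\<lambda>j. h (j + c)) i)"
    by (rule sum_shift1) (metis assms add.commute add_0)
  also have "\<dots> = (\<Sum>i<p. h i)" using Suc by simp
  finally show ?case .
qed

lemma mod_pred1: "0 < m \<Longrightarrow> k < m \<Longrightarrow> Suc ((k + m - 1) mod m) mod m = k"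
proof (cases k)
  case 0 assume "0 < m" "k < m"
  thus ?thesis using 0 by (cases m) auto
next
  case (Suc k') assume "0 < m" "k < m"
  hence "(k + m - 1) mod m = k'" using Suc by (simp add: add.commute)
  thus ?thesis using Suc \<open>k < m\<close> by simp
qed

lemma mod_pred2: "0 < m \<Longrightarrow> i < m \<Longrightarrow> ((Suc i mod m) + m - 1) mod m = i"
proof (cases "Suc i < m")
  case True assume "0 < m" "i < m" thus ?thesis using True by simp
next
  case False assume "0 < m" "i < m"
  hence "Suc i = m" using False by simp
  thus ?thesis by auto
qed

section \<open>Components of orthogonal decompositions\<close>

lemma scale_sum: "c *s (\<Sum>i\<in>A. f i) = (\<Sum>i\<in>A. c *s (f i :: complex^'n))"
  by (simp add: vec_eq_iff sum_distrib_left)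

lemma csub_zero: "csubspace U \<Longrightarrow> 0 \<in> U" by (simp add: csubspace_def)
lemma csub_add: "csubspace U \<Longrightarrow> x \<in> U \<Longrightarrow> y \<in> U \<Longrightarrow> x + y \<in> U" by (simp add: csubspace_def)
lemma csub_scale: "csubspace U \<Longrightarrow> x \<in> U \<Longrightarrow> c *s x \<in> U" by (simp add: csubspace_def)
lemma csub_neg: "csubspace U \<Longrightarrow> x \<in> U \<Longrightarrow> - x \<in> U"
  using csub_scale[of U x "-1"] by (simp add: vector_sneg_minus1[symmetric])
lemma csub_diff: "csubspace U \<Longrightarrow> x \<in> U \<Longrightarrow> y \<in> U \<Longrightarrow> x - y \<in> U"
  using csub_add[of U x "-y"] csub_neg[of U y] by simp
lemma csub_sum:
  assumes "csubspace U" "finite A" "\<And>i. i \<in> A \<Longrightarrow> f i \<in> U"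
  shows "(\<Sum>i\<in>A. f i) \<in> U"
  using assms(2,3) by (induct A rule: finite_induct) (auto simp: csub_zero[OF assms(1)] csub_add[OF assms(1)])

lemma od_sub: "orth_decomp m U \<Longrightarrow> i < m \<Longrightarrow> csubspace (U i)"
  by (simp add: orth_decomp_def)
lemma od_nz:
  assumes "orth_decomp m U" "i < m" shows "\<exists>u\<in>U i. u \<noteq> 0"
proof -
  have "csubspace (U i)" "U i \<noteq> {0}" using assms by (auto simp: orth_decomp_def)
  thus ?thesis using csub_zero by blast
qed
lemma od_orth: "orth_decomp m U \<Longrightarrow> i < m \<Longrightarrow> j < m \<Longrightarrow> i \<noteq> j \<Longrightarrow> a \<in> U i \<Longrightarrow> b \<in> U j \<Longrightarrow> cinner a b = 0"
  by (simp add: orth_decomp_def)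

lemma od_unique:
  assumes od: "orth_decomp m U" and u: "\<forall>j<m. u j \<in> U j" and w: "\<forall>j<m. w j \<in> U j"
    and eq: "(\<Sum>j<m. u j) = (\<Sum>j<m. w j)" and i: "i < m"
  shows "u i = w i"
proof -
  define d where "d j = u j - w j" for j
  have d: "d j \<in> U j" if "j < m" for j using u w that od_sub[OF od that] by (simp add: d_def csub_diff)
  have "(\<Sum>j<m. d j) = 0" using eq by (simp add: d_def sum_subtractf)
  hence "0 = cinner (d i) (\<Sum>j<m. d j)" by simp
  also have "\<dots> = (\<Sum>j<m. cinner (d i) (d j))" by (simp add: cinner_sum_right)
  also have "\<dots> = cinner (d i) (d i)"
    by (rule sum_single) (use i d od_orth[OF od] in auto)
  finally have "d i = 0" by simp
  thus ?thesis by (simp add: d_def)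
qed

definition dcomp :: "nat \<Rightarrow> (nat \<Rightarrow> (complex^'n) set) \<Rightarrow> nat \<Rightarrow> complex^'n \<Rightarrow> complex^'n" where
  "dcomp m U i x = (SOME u. (\<forall>j<m. u j \<in> U j) \<and> x = (\<Sum>j<m. u j)) i"

lemma dcomp_spec:
  assumes "orth_decomp m U"
  shows "(\<forall>j<m. dcomp m U j x \<in> U j) \<and> x = (\<Sum>j<m. dcomp m U j x)"
proof -
  have "\<forall>x. \<exists>u. (\<forall>j<m. u j \<in> U j) \<and> x = (\<Sum>j<m. u j)" using assms unfolding orth_decomp_def by (elim conjE)
  hence "\<exists>u. (\<forall>j<m. u j \<in> U j) \<and> x = (\<Sum>j<m. u j)" by (rule spec)
  thus ?thesis unfolding dcomp_def by (rule someI_ex)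
qed

lemma dcomp_in: "orth_decomp m U \<Longrightarrow> j < m \<Longrightarrow> dcomp m U j x \<in> U j"
  using dcomp_spec by blast
lemma dcomp_sum: "orth_decomp m U \<Longrightarrow> (\<Sum>j<m. dcomp m U j x) = x"
  using dcomp_spec by metis

lemma dcomp_char:
  assumes "orth_decomp m U" "\<forall>j<m. u j \<in> U j" "x = (\<Sum>j<m. u j)" "i < m"
  shows "dcomp m U i x = u i"
  by (rule od_unique[OF assms(1) _ assms(2) _ assms(4)])
     (use dcomp_spec[OF assms(1), of x] assms(3) in auto)

lemma dcomp_add: "orth_decomp m U \<Longrightarrow> i < m \<Longrightarrow> dcomp m U i (x + y) = dcomp m U i x + dcomp m U i y"
  by (rule dcomp_char) (auto simp: dcomp_in csub_add od_sub dcomp_sum sum.distrib)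

lemma dcomp_scale: "orth_decomp m U \<Longrightarrow> i < m \<Longrightarrow> dcomp m U i (c *s x) = c *s dcomp m U i x"
  by (rule dcomp_char) (auto simp: dcomp_in csub_scale od_sub scale_sum[symmetric] dcomp_sum)


lemma dcomp_zero: "orth_decomp m U \<Longrightarrow> i < m \<Longrightarrow> dcomp m U i 0 = 0"
  using dcomp_scale[of m U i 0 0] by simp
lemma dcomp_neg: "orth_decomp m U \<Longrightarrow> i < m \<Longrightarrow> dcomp m U i (- x) = - dcomp m U i x"
  using dcomp_scale[of m U i "-1" x] by (simp add: vector_sneg_minus1[symmetric])
lemma dcomp_diff: "orth_decomp m U \<Longrightarrow> i < m \<Longrightarrow> dcomp m U i (x - y) = dcomp m U i x - dcomp m U i y"
  using dcomp_add[of m U i x "-y"] dcomp_neg[of m U i y] by simp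
lemma dcomp_sumv:
  assumes "orth_decomp m U" "i < m" "finite A"
  shows "dcomp m U i (\<Sum>a\<in>A. f a) = (\<Sum>a\<in>A. dcomp m U i (f a))"
  using assms(3) by (induct A rule: finite_induct) (auto simp: dcomp_zero[OF assms(1,2)] dcomp_add[OF assms(1,2)])

lemma dcomp_elem:
  assumes od: "orth_decomp m U" and j: "j < m" and y: "y \<in> U j" and i: "i < m"
  shows "dcomp m U i y = (if i = j then y else 0)"
proof (rule dcomp_char[OF od _ _ i])
  show "\<forall>k<m. (if k = j then y else 0) \<in> U k" using y csub_zero od_sub[OF od] by auto
  show "y = (\<Sum>k<m. if k = j then y else 0)" using j by simp
qed

lemma dcomp_idem: "orth_decomp m U \<Longrightarrow> i < m \<Longrightarrow> dcomp m U i (dcomp m U i x) = dcomp m U i x"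
  using dcomp_elem[of m U i "dcomp m U i x" i] dcomp_in[of m U i x] by simp
lemma dcomp_cross: "orth_decomp m U \<Longrightarrow> i < m \<Longrightarrow> j < m \<Longrightarrow> i \<noteq> j \<Longrightarrow> dcomp m U i (dcomp m U j x) = 0"
  using dcomp_elem[of m U j "dcomp m U j x" i] dcomp_in[of m U j x] by simp

lemma cinner_dcomp_left:
  assumes od: "orth_decomp m U" and i: "i < m" and a: "a \<in> U i"
  shows "cinner a y = cinner a (dcomp m U i y)"
proof -
  have "cinner a y = cinner a (\<Sum>j<m. dcomp m U j y)" using dcomp_sum[OF od] by simp
  also have "\<dots> = (\<Sum>j<m. cinner a (dcomp m U j y))" by (simp add: cinner_sum_right)
  also have "\<dots> = cinner a (dcomp m U i y)"
    by (rule sum_single) (use i a od_orth[OF od] dcomp_in[OF od] in auto)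
  finally show ?thesis .
qed

lemma cinner_dcomp_right:
  assumes od: "orth_decomp m U" and i: "i < m" and a: "a \<in> U i"
  shows "cinner y a = cinner (dcomp m U i y) a"
  using cinner_dcomp_left[OF assms, of y] by (metis cinner_cnj)

lemma dcomp_selfadj:
  assumes od: "orth_decomp m U" and i: "i < m"
  shows "cinner (dcomp m U i x) y = cinner x (dcomp m U i y)"
proof -
  have "cinner (dcomp m U i x) y = cinner (dcomp m U i x) (dcomp m U i y)"
    by (rule cinner_dcomp_left[OF od i dcomp_in[OF od i]])
  also have "\<dots> = cinner x (dcomp m U i y)"
    by (rule cinner_dcomp_right[OF od i dcomp_in[OF od i], symmetric])
  finally show ?thesis .
qed

lemma dcomp_orth_zero:
  assumes od: "orth_decomp m U" and i: "i < m" and orth: "\<forall>a\<in>U i. cinner a y = 0"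
  shows "dcomp m U i y = 0"
proof -
  have "cinner (dcomp m U i y) (dcomp m U i y) = cinner (dcomp m U i y) y"
    using cinner_dcomp_left[OF od i dcomp_in[OF od i], of y y] by simp
  also have "\<dots> = 0" using orth dcomp_in[OF od i] by blast
  finally show ?thesis by simp
qed

lemma dcomp_shift:
  assumes od: "orth_decomp m U" and cyc: "\<forall>i<m. \<forall>u\<in>U i. B *v u \<in> U (Suc i mod m)" and i: "i < m"
  shows "dcomp m U (Suc i mod m) (B *v x) = B *v dcomp m U i x"
proof -
  have m: "0 < m" using i by simp
  define g where "g l = B *v dcomp m U l x" for l
  define u where "u k = g ((k + m - 1) mod m)" for k
  have uin: "\<forall>k<m. u k \<in> U k"
  proof (intro allI impI)
    fix k assume k: "k < m"
    have "(k + m - 1) mod m < m" using m by simp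
    hence "g ((k + m - 1) mod m) \<in> U (Suc ((k + m - 1) mod m) mod m)"
      using cyc dcomp_in[OF od] by (simp add: g_def)
    thus "u k \<in> U k" using mod_pred1[OF m k] by (simp add: u_def)
  qed
  have "(\<Sum>k<m. u k) = (\<Sum>k<m. (\<lambda>l. g (l mod m)) (k + (m - 1)))"
    using m by (simp add: u_def add.assoc)
  also have "\<dots> = (\<Sum>k<m. (\<lambda>l. g (l mod m)) k)" by (rule sum_periodic_shift) simp
  also have "\<dots> = (\<Sum>k<m. g k)" by simp
  also have "\<dots> = B *v x" by (simp add: g_def mv_sum[symmetric] dcomp_sum[OF od])
  finally have sumu: "B *v x = (\<Sum>k<m. u k)" by simp
  have "dcomp m U (Suc i mod m) (B *v x) = u (Suc i mod m)"
    by (rule dcomp_char[OF od uin sumu]) (use m in simp)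
  also have "\<dots> = B *v dcomp m U i x" using mod_pred2[OF m i] by (simp add: u_def g_def)
  finally show ?thesis .
qed

lemma axis_nz: "axis k (1::complex) \<noteq> 0"
  by (simp add: vec_eq_iff axis_def)

lemma cyclic_1: "cyclic_decomp Bs 1"
proof -
  have "orth_decomp 1 (\<lambda>_. (UNIV :: (complex^'n) set))"
    unfolding orth_decomp_def
  proof (intro conjI allI impI)
    fix i :: nat show "csubspace (UNIV :: (complex^'n) set)" by (simp add: csubspace_def)
    show "(UNIV :: (complex^'n) set) \<noteq> {0}" using axis_nz[of undefined] by blast
  next
    fix i j :: nat assume "i < 1" "j < 1" "i \<noteq> j" thus "\<forall>u\<in>UNIV. \<forall>v\<in>UNIV. cinner u v = 0" by simp
  next
    fix x :: "complex^'n"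
    show "\<exists>u. (\<forall>i<(1::nat). u i \<in> UNIV) \<and> x = (\<Sum>i<(1::nat). u i)" 
    proof -
      show ?thesis by (intro exI[of _ "\<lambda>_. x"]) simp
    qed
  qed
  thus ?thesis unfolding cyclic_decomp_def by blast
qed

lemma real_inner_cinner: "inner x y = Re (cinner x (y::complex^'n))"
  by (simp add: inner_vec_def cinner_def inner_complex_def)

lemma od_bound:
  assumes od: "orth_decomp m (U :: nat \<Rightarrow> (complex^'n) set)"
  shows "m \<le> DIM(complex^'n)"
proof -
  define v where "v i = (SOME u. u \<in> U i \<and> u \<noteq> 0)" for i
  have v: "v i \<in> U i \<and> v i \<noteq> 0" if "i < m" for i
    unfolding v_def by (rule someI_ex) (use od_nz[OF od that] in blast)
  have orth: "cinner (v i) (v j) = 0" if "i < m" "j < m" "i \<noteq> j" for i j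
    using od_orth[OF od that] v that by blast
  have inj: "inj_on v {..<m}"
  proof (rule inj_onI)
    fix i j assume ij: "i \<in> {..<m}" "j \<in> {..<m}" "v i = v j"
    show "i = j"
    proof (rule ccontr)
      assume "i \<noteq> j"
      hence "cinner (v i) (v j) = 0" by (intro orth) (use ij in auto)
      hence "cinner (v i) (v i) = 0" using ij(3) by metis
      thus False using v[of i] ij(1) by simp
    qed
  qed
  have "pairwise orthogonal (v ` {..<m})"
  proof (unfold pairwise_def, intro ballI impI)
    fix a b assume a: "a \<in> v ` {..<m}" and b: "b \<in> v ` {..<m}" and ab: "a \<noteq> b"
    from a obtain i where i: "i < m" "a = v i" by auto
    from b obtain j where j: "j < m" "b = v j" by auto
    have "i \<noteq> j" using ab i j by auto
    thus "orthogonal a b" unfolding orthogonal_def real_inner_cinner using orth i j by simp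
  qed
  moreover have "0 \<notin> v ` {..<m}" using v by auto
  ultimately have "independent (v ` {..<m})" by (rule pairwise_orthogonal_independent)
  hence "card (v ` {..<m}) \<le> DIM(complex^'n)" using independent_bound by blast
  thus ?thesis using card_image[OF inj] by simp
qed

lemma cyclic_bound: "cyclic_decomp (Bs :: (complex^'n^'n) set) m \<Longrightarrow> m \<le> DIM(complex^'n)"
  unfolding cyclic_decomp_def using od_bound by blast

lemma period_greatest: "cyclic_decomp (Bs :: (complex^'n^'n) set) m \<Longrightarrow> m \<le> period Bs"
  unfolding period_def
  by (rule Greatest_le_nat[where b = "DIM(complex^'n)"], assumption, erule cyclic_bound)

lemma period_cyclic: "cyclic_decomp (Bs :: (complex^'n^'n) set) (period Bs)"
  unfolding period_def
  by (rule GreatestI_nat[where b = "DIM(complex^'n)"], rule cyclic_1, erule cyclic_bound)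

lemma period_pos: "1 \<le> period Bs"
  using period_greatest[OF cyclic_1] .


section \<open>Even period gives an isotropic 2-decomposition\<close>

lemma sum2: "(\<Sum>j<(2::nat). f j) = f 0 + f 1"
  by (simp add: numeral_2_eq_2)

lemma cinner_orth_sym: "cinner a b = 0 \<Longrightarrow> cinner b a = 0"
  by (metis cinner_cnj complex_cnj_zero)

lemma even_iso:
  fixes U :: "nat \<Rightarrow> (complex^'n) set" and Bs :: "(complex^'n^'n) set"
  assumes od: "orth_decomp p U"
    and cyc: "\<forall>i<p. \<forall>B\<in>Bs. \<forall>u\<in>U i. B *v u \<in> U (Suc i mod p)"
    and ev: "even p" and p2: "2 \<le> p"
  shows "isotropic_2_decomp Bs"
proof -
  define V where "V j = {x. \<forall>i<p. i mod 2 \<noteq> j \<longrightarrow> (\<forall>u\<in>U i. cinner u x = 0)}" for j :: nat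
  have Vsub: "csubspace (V j)" for j
    unfolding csubspace_def V_def by (auto simp: cinner_add_right cinner_scale_right)
  have UV: "U j \<subseteq> V j" if "j < 2" for j
  proof
    fix x assume x: "x \<in> U j"
    show "x \<in> V j" unfolding V_def
    proof (intro CollectI allI impI ballI)
      fix i u assume i: "i < p" "i mod 2 \<noteq> j" and u: "u \<in> U i"
      have "i \<noteq> j" using i that by auto
      thus "cinner u x = 0" using od_orth[OF od i(1) _ _ u x] that p2 by simp
    qed
  qed
  have Vnz: "V j \<noteq> {0}" if "j < 2" for j
    using od_nz[OF od, of j] UV[OF that] that p2 by auto
  have zero: "dcomp p U i x = 0" if "x \<in> V j" "i < p" "i mod 2 \<noteq> j" for x i j
    by (rule dcomp_orth_zero[OF od \<open>i < p\<close>]) (use that in \<open>auto simp: V_def\<close>)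
  have orthV: "cinner x y = 0" if "x \<in> V j" "y \<in> V k" "j < 2" "k < 2" "j \<noteq> k" for x y j k
  proof -
    have "cinner x y = cinner x (\<Sum>i<p. dcomp p U i y)" using dcomp_sum[OF od] by simp
    also have "\<dots> = (\<Sum>i<p. cinner x (dcomp p U i y))" by (simp add: cinner_sum_right)
    also have "\<dots> = 0"
    proof (rule sum.neutral, rule ballI)
      fix i assume i: "i \<in> {..<p}"
      show "cinner x (dcomp p U i y) = 0"
      proof (cases "i mod 2 = k")
        case True
        hence "i mod 2 \<noteq> j" using that by auto
        hence "cinner (dcomp p U i y) x = 0" using that(1) dcomp_in[OF od] i by (auto simp: V_def)
        thus ?thesis by (rule cinner_orth_sym)
      next
        case False thus ?thesis using zero[OF that(2)] i by simp
      qed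
    qed
    finally show ?thesis .
  qed
  define part where "part j x = (\<Sum>i<p. if i mod 2 = j then dcomp p U i x else 0)" for j x
  have part_in: "part j x \<in> V j" for j x
    unfolding V_def
  proof (intro CollectI allI impI ballI)
    fix i u assume i: "i < p" "i mod 2 \<noteq> j" and u: "u \<in> U i"
    have "cinner u (part j x) = (\<Sum>l<p. cinner u (if l mod 2 = j then dcomp p U l x else 0))"
      by (simp add: part_def cinner_sum_right)
    also have "\<dots> = 0"
    proof (rule sum.neutral, rule ballI)
      fix l assume l: "l \<in> {..<p}"
      show "cinner u (if l mod 2 = j then dcomp p U l x else 0) = 0"
      proof (cases "l mod 2 = j")
        case True
        hence "l \<noteq> i" using i by auto
        thus ?thesis using True od_orth[OF od i(1) _ _ u dcomp_in[OF od]] l by auto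
      qed simp
    qed
    finally show "cinner u (part j x) = 0" .
  qed
  have part_sum: "part 0 x + part 1 x = x" for x
  proof -
    have "part 0 x + part 1 x = (\<Sum>i<p. dcomp p U i x)"
      unfolding part_def sum.distrib[symmetric] by (rule sum.cong) auto
    thus ?thesis using dcomp_sum[OF od] by simp
  qed
  have odV: "orth_decomp 2 V"
    unfolding orth_decomp_def
  proof (intro conjI allI impI ballI)
    fix i :: nat assume "i < 2" thus "csubspace (V i)" "V i \<noteq> {0}" using Vsub Vnz by auto
  next
    fix i j :: nat and u v assume "i < 2" "j < 2" "i \<noteq> j" "u \<in> V i" "v \<in> V j"
    thus "cinner u v = 0" using orthV by blast
  next
    fix x show "\<exists>u. (\<forall>i<2. u i \<in> V i) \<and> x = (\<Sum>i<2. u i)"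
      using part_sum[of x] part_in by (intro exI[of _ "\<lambda>j. part j x"]) (simp add: sum2)
  qed
  have iso: "cinner u (B *v u') = 0" if "i < 2" "u \<in> V i" "u' \<in> V i" "B \<in> Bs" for i u u' B
  proof -
    have "cinner u (B *v u') = cinner u (B *v (\<Sum>l<p. dcomp p U l u'))" using dcomp_sum[OF od] by simp
    also have "\<dots> = (\<Sum>l<p. cinner u (B *v dcomp p U l u'))" by (simp add: mv_sum cinner_sum_right)
    also have "\<dots> = 0"
    proof (rule sum.neutral, rule ballI)
      fix l assume l: "l \<in> {..<p}"
      show "cinner u (B *v dcomp p U l u') = 0"
      proof (cases "l mod 2 = i")
        case True
        have "B *v dcomp p U l u' \<in> U (Suc l mod p)" using cyc dcomp_in[OF od] l that(4) by auto
        moreover have "(Suc l mod p) mod 2 \<noteq> i"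
        proof -
          have "(Suc l mod p) mod 2 = Suc l mod 2" using ev by (rule mod_mod_cancel)
          moreover have "Suc l mod 2 \<noteq> l mod 2" by presburger
          ultimately show ?thesis using True by simp
        qed
        moreover have "Suc l mod p < p" using p2 by simp
        ultimately have "cinner (B *v dcomp p U l u') u = 0" using that(2) by (auto simp: V_def)
        thus ?thesis by (rule cinner_orth_sym)
      next
        case False thus ?thesis using zero[OF that(3)] l by simp
      qed
    qed
    finally show ?thesis .
  qed
  show ?thesis unfolding isotropic_2_decomp_def using odV iso by blast
qed


lemma iso_cyclic:
  assumes odV: "orth_decomp 2 V"
    and iso: "\<forall>i<2. \<forall>u\<in>V i. \<forall>u'\<in>V i. \<forall>B\<in>Bs. cinner u (B *v u') = 0"
  shows "\<forall>j<2. \<forall>B\<in>Bs. \<forall>v\<in>V j. B *v v \<in> V (Suc j mod 2)"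
proof (intro allI impI ballI)
  fix j :: nat and B v assume j: "j < 2" and B: "B \<in> Bs" and v: "v \<in> V j"
  have z: "dcomp 2 V j (B *v v) = 0"
    by (rule dcomp_orth_zero[OF odV j]) (use iso j v B in blast)
  have s: "B *v v = dcomp 2 V 0 (B *v v) + dcomp 2 V 1 (B *v v)"
    using dcomp_sum[OF odV, of "B *v v"] by (simp add: sum2)
  show "B *v v \<in> V (Suc j mod 2)"
  proof (cases "j = 0")
    case True
    hence e: "B *v v = dcomp 2 V 1 (B *v v)" using s z by simp
    have "dcomp 2 V 1 (B *v v) \<in> V 1" by (rule dcomp_in[OF odV]) simp
    moreover have "Suc j mod 2 = 1" using True by simp
    ultimately show ?thesis using e by simp
  next
    case False
    hence j1: "j = 1" using j by simp
    hence e: "B *v v = dcomp 2 V 0 (B *v v)" using s z by simp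
    have "dcomp 2 V 0 (B *v v) \<in> V 0" by (rule dcomp_in[OF odV]) simp
    moreover have "Suc j mod 2 = 0" using j1 by simp
    ultimately show ?thesis using e by simp
  qed
qed

section \<open>Positive semidefinite matrices\<close>

lemma cinner_eq_vec: "(\<And>x. cinner x u = cinner x v) \<Longrightarrow> u = v"
proof -
  assume h: "\<And>x. cinner x u = cinner x v"
  have "cinner (u - v) (u - v) = 0" by (simp add: cinner_diff_right h)
  thus "u = v" by simp
qed

lemma mv_add_left: "(A + B) *v x = A *v x + B *v (x::complex^'n)"
  by (rule matrix_vector_mult_add_rdistrib)

lemma psd_herm:
  assumes "psd A"
  shows "adj A = A"
proof -
  define q where "q z = cinner z (A *v z)" for z
  have Imq: "Im (q z) = 0" for z using assms by (simp add: psd_def q_def)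
  have key: "cinner x (A *v y) = cnj (cinner y (A *v x))" for x y
  proof -
    define a where "a = cinner x (A *v y)"
    define b where "b = cinner y (A *v x)"
    have e1: "q (x + y) = q x + a + b + q y"
      by (simp add: q_def a_def b_def matrix_vector_right_distrib cinner_add_left cinner_add_right)
    have e2: "q (x + \<i> *s y) = q x + \<i> * a - \<i> * b + q y"
      by (simp add: q_def a_def b_def matrix_vector_right_distrib cinner_add_left cinner_add_right
          mv_scale cinner_scale_left cinner_scale_right algebra_simps)
    have "Im (a + b) = 0" using e1 Imq[of "x+y"] Imq[of x] Imq[of y] by simp
    moreover have "Re (a - b) = 0" using e2 Imq[of "x + \<i> *s y"] Imq[of x] Imq[of y] by simp
    ultimately show ?thesis by (simp add: a_def b_def complex_eq_iff)
  qed
  show ?thesis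
  proof (rule matrix_eqI, rule cinner_eq_vec)
    fix y x
    have "cinner x (adj A *v y) = cinner (A *v x) y" by (metis cinner_adj adj_adj)
    also have "\<dots> = cnj (cinner y (A *v x))" by (rule cinner_cnj)
    also have "\<dots> = cinner x (A *v y)" by (rule key[symmetric])
    finally show "cinner x (adj A *v y) = cinner x (A *v y)" .
  qed
qed

lemma herm_cinner: "adj A = A \<Longrightarrow> cinner x (A *v y) = cinner (A *v x) y"
  by (metis cinner_adj)

lemma psd_zero_form:
  assumes psd: "psd A" and q0: "cinner x (A *v x) = 0"
  shows "A *v x = 0"
proof (rule ccontr)
  assume ne: "A *v x \<noteq> 0"
  define y where "y = A *v x"
  have herm: "adj A = A" by (rule psd_herm[OF psd])
  define N where "N = Re (cinner y y)"
  define Q where "Q = Re (cinner y (A *v y))"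
  have N: "N > 0" using ne cinner_self_Re_nonneg[of y] cinner_self_Im[of y]
    unfolding N_def y_def by (metis complex_eq_iff less_eq_real_def zero_complex.simps cinner_self_eq_0)
  have Q: "Q \<ge> 0" using psd by (simp add: psd_def Q_def)
  define t where "t = N / (Q + 1)"
  have t: "t > 0" using N Q by (simp add: t_def)
  have c1: "cinner x (A *v y) = cinner y y" using herm_cinner[OF herm, of x y] by (simp add: y_def)
  have c2: "cinner y (A *v x) = cinner y y" by (simp add: y_def)
  have "cinner (x - of_real t *s y) (A *v (x - of_real t *s y))
        = cinner x (A *v x) - of_real t * cinner x (A *v y) - of_real t * cinner y (A *v x)
          + of_real t * of_real t * cinner y (A *v y)"
    by (simp add: matrix_vector_mult_diff_distrib cinner_diff_left cinner_diff_right mv_scale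
        cinner_scale_left cinner_scale_right algebra_simps)
  also have "\<dots> = - 2 * of_real t * cinner y y + of_real t * of_real t * cinner y (A *v y)"
    using q0 c1 c2 by simp
  finally have "Re (cinner (x - of_real t *s y) (A *v (x - of_real t *s y))) = - 2 * t * N + t * t * Q"
    by (simp add: N_def Q_def)
  moreover have "0 \<le> Re (cinner (x - of_real t *s y) (A *v (x - of_real t *s y)))"
    using psd by (simp add: psd_def)
  moreover have "t * Q < N"
  proof -
    have "t * Q = N * (Q / (Q + 1))" by (simp add: t_def)
    also have "\<dots> < N * 1"
    proof (rule mult_strict_left_mono)
      show "Q / (Q + 1) < 1" using Q by simp
    qed (use N in simp)
    finally show ?thesis by simp
  qed
  moreover have "t * (t * Q) < t * N" using mult_strict_left_mono[OF \<open>t * Q < N\<close> t] .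
  moreover have "t * t * Q = t * (t * Q)" by (simp add: mult.assoc)
  moreover have "0 < t * N" using t N by simp
  ultimately show False by linarith
qed

lemma cinner_axis: "cinner (axis i 1) w = w $ i"
proof -
  have "cinner (axis i 1) w = (\<Sum>k\<in>UNIV. if k = i then w$k else 0)"
    unfolding cinner_def axis_def by (rule sum.cong) auto
  thus ?thesis by simp
qed

lemma mv_axis: "(A *v axis i 1) $ k = A $ k $ (i::'n::finite)"
proof -
  have "(A *v axis i 1) $ k = (\<Sum>j\<in>UNIV. A$k$j * (if j = i then 1 else 0))"
    by (simp add: matrix_vector_mult_def axis_def)
  also have "\<dots> = (\<Sum>j\<in>UNIV. if j = i then A$k$j else 0)" by (rule sum.cong) auto
  finally show ?thesis by simp
qed

lemma ctrace_cinner: "ctrace A = (\<Sum>i\<in>UNIV. cinner (axis i 1) (A *v axis i 1))"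
  by (simp add: ctrace_def cinner_axis mv_axis)

lemma psd_trace: "psd A \<Longrightarrow> Im (ctrace A) = 0 \<and> 0 \<le> Re (ctrace A)"
  by (simp add: ctrace_cinner psd_def sum_nonneg)

lemma psd_trace0:
  assumes psd: "psd A" and tr: "ctrace A = 0"
  shows "A = 0"
proof -
  have "Re (ctrace A) = 0" using tr by simp
  hence "\<forall>i\<in>UNIV. Re (cinner (axis i 1) (A *v axis i 1)) = 0"
    using psd by (subst (asm) ctrace_cinner, subst (asm) Re_sum, subst (asm) sum_nonneg_eq_0_iff)
      (auto simp: psd_def)
  hence "cinner (axis i 1) (A *v axis i 1) = 0" for i
    using psd by (simp add: psd_def complex_eq_iff)
  hence "A *v axis i 1 = 0" for i using psd_zero_form[OF psd] by blast
  hence "A $ k $ i = 0" for k i using mv_axis[of A i k] by simp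
  thus ?thesis by (simp add: vec_eq_iff)
qed

lemma mat_mult_entry: "(mat c ** N) $ i $ j = c * N $ i $ (j::'n::finite)"
proof -
  have "(mat c ** N) $ i $ j = (\<Sum>k\<in>UNIV. (if i = k then c else 0) * N $ k $ j)"
    by (simp add: matrix_matrix_mult_def mat_def)
  also have "\<dots> = (\<Sum>k\<in>UNIV. (if i = k then c * N $ k $ j else 0))" by (rule sum.cong) auto
  also have "\<dots> = c * N $ i $ j" by simp
  finally show ?thesis .
qed

lemma ctrace_mat_mult: "ctrace (mat c ** N) = c * ctrace (N::complex^'n^'n)"
  by (simp add: ctrace_def mat_mult_entry sum_distrib_left)

lemma ctrace_zero: "ctrace (0::complex^'n^'n) = 0" by (simp add: ctrace_def)

lemma channel_mat: "finite Bs \<Longrightarrow> channel Bs (mat c ** N) = mat c ** channel Bs N"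
proof -
  assume f: "finite Bs"
  have "channel Bs (mat c ** N) = (\<Sum>B\<in>Bs. mat c ** (B ** N ** adj B))"
    unfolding channel_def
  proof (rule sum.cong)
    fix B show "B ** (mat c ** N) ** adj B = mat c ** (B ** N ** adj B)"
      by (simp add: matrix_mul_assoc mat_comm[of c B])
  qed simp
  also have "\<dots> = mat c ** channel Bs N" by (simp add: channel_def mult_sum_left f)
  finally show ?thesis .
qed


section \<open>Schur-type lemma from irreducibility\<close>

lemma mat_mult_mv: "(mat a ** N) *v x = a *s (N *v (x::complex^'n))"
  by (simp add: matrix_vector_mul_assoc[symmetric] mat_mv)

lemma iqc_rho:
  assumes "IQC Bs"
  shows "\<exists>\<rho>. \<rho> \<in> density \<and> channel Bs \<rho> = \<rho> \<and> posdef \<rho> \<and>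
           (\<forall>\<sigma>. \<sigma> \<in> density \<and> channel Bs \<sigma> = \<sigma> \<longrightarrow> \<sigma> = \<rho>)"
proof -
  from assms obtain \<rho> where r: "\<rho> \<in> density \<and> channel Bs \<rho> = \<rho>"
    and u: "\<forall>\<sigma>. \<sigma> \<in> density \<and> channel Bs \<sigma> = \<sigma> \<longrightarrow> \<sigma> = \<rho>"
    unfolding IQC_def by (metis (no_types, lifting))
  have "posdef \<rho>" using assms r unfolding IQC_def by blast
  thus ?thesis using r u by blast
qed

lemma posdef_inj: "posdef \<rho> \<Longrightarrow> \<rho> *v z = 0 \<Longrightarrow> z = 0"
  unfolding posdef_def by (metis cinner_zero_right zero_complex.simps(1) less_irrefl)

lemma fixed_psd:
  assumes fin: "finite Bs" and rho: "\<rho> \<in> density"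
    and uniq: "\<forall>\<sigma>. \<sigma> \<in> density \<and> channel Bs \<sigma> = \<sigma> \<longrightarrow> \<sigma> = \<rho>"
    and psd: "psd N" and fx: "channel Bs N = N"
  shows "N = mat (ctrace N) ** \<rho>"
proof (cases "ctrace N = 0")
  case True
  hence "N = 0" using psd_trace0[OF psd] by simp
  thus ?thesis using True by simp
next
  case False
  define c where "c = ctrace N"
  have cIm: "Im c = 0" and cRe: "Re c > 0"
    using psd_trace[OF psd] False unfolding c_def by (auto simp: complex_eq_iff)
  define N' where "N' = mat (1/c) ** N"
  have cr: "c = of_real (Re c)" using cIm by (simp add: complex_eq_iff)
  have ic: "1 / c = of_real (1 / Re c)" by (metis cr of_real_divide of_real_1)
  have "psd N'"
    unfolding psd_def N'_def mat_mult_mv cinner_scale_right ic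
    using psd cRe by (simp add: psd_def)
  moreover have "ctrace N' = 1" using False by (simp add: N'_def ctrace_mat_mult c_def)
  moreover have "channel Bs N' = N'" by (simp add: N'_def channel_mat[OF fin] fx)
  ultimately have "N' = \<rho>" using uniq by (simp add: density_def)
  hence "mat c ** N' = mat c ** \<rho>" by simp
  moreover have "mat c ** N' = N" using False
    by (simp add: N'_def matrix_mul_assoc mat_mat c_def)
  ultimately show ?thesis by (simp add: c_def)
qed

lemma sandwich_channel:
  assumes fin: "finite Bs" and comm: "\<forall>B\<in>Bs. K ** B = B ** K \<and> K ** adj B = adj B ** K"
  shows "channel Bs (K ** R ** K) = K ** channel Bs R ** K"
proof -
  have "channel Bs (K ** R ** K) = (\<Sum>B\<in>Bs. K ** (B ** R ** adj B) ** K)"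
    unfolding channel_def
  proof (rule sum.cong)
    fix B assume B: "B \<in> Bs"
    have "B ** (K ** R ** K) ** adj B = (B ** K) ** R ** (K ** adj B)" by (simp add: matrix_mul_assoc)
    also have "\<dots> = (K ** B) ** R ** (adj B ** K)" using comm B by simp
    also have "\<dots> = K ** (B ** R ** adj B) ** K" by (simp add: matrix_mul_assoc)
    finally show "B ** (K ** R ** K) ** adj B = K ** (B ** R ** adj B) ** K" .
  qed simp
  also have "\<dots> = K ** channel Bs R ** K"
    by (simp add: channel_def mult_sum_left mult_sum_right fin)
  finally show ?thesis .
qed

lemma sandwich_psd:
  assumes "psd R" "adj K = K"
  shows "psd (K ** R ** K)"
proof -
  have "cinner x ((K ** R ** K) *v x) = cinner (K *v x) (R *v (K *v x))" for x
    using herm_cinner[OF assms(2), of x "R *v (K *v x)"] by (simp add: matrix_vector_mul_assoc matrix_mul_assoc)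
  thus ?thesis using assms(1) by (simp add: psd_def)
qed

lemma herm_schur:
  assumes iqc: "IQC Bs" and herm: "adj H = H" and comm: "\<forall>B\<in>Bs. H ** B = B ** H"
  shows "\<exists>c. H = mat c"
proof -
  have fin: "finite Bs" using iqc by (simp add: IQC_def)
  obtain \<rho> where rho: "\<rho> \<in> density" "channel Bs \<rho> = \<rho>" "posdef \<rho>"
    and uniq: "\<forall>\<sigma>. \<sigma> \<in> density \<and> channel Bs \<sigma> = \<sigma> \<longrightarrow> \<sigma> = \<rho>"
    using iqc_rho[OF iqc] by blast
  have rpsd: "psd \<rho>" and rtr: "ctrace \<rho> = 1" using rho(1) by (auto simp: density_def)
  have rherm: "adj \<rho> = \<rho>" by (rule psd_herm[OF rpsd])
  have commA: "H ** adj B = adj B ** H" if "B \<in> Bs" for B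
  proof -
    have "adj (H ** B) = adj (B ** H)" using comm that by simp
    thus ?thesis by (simp add: adj_mult herm)
  qed
  have sand: "K ** \<rho> ** K = mat (ctrace (K ** \<rho> ** K)) ** \<rho>"
    if hK: "adj K = K" and cK: "\<forall>B\<in>Bs. K ** B = B ** K \<and> K ** adj B = adj B ** K" for K
    by (rule fixed_psd[OF fin rho(1) uniq sandwich_psd[OF rpsd hK]])
       (simp add: sandwich_channel[OF fin cK] rho(2))
  have shift_ok: "adj (H - mat a) = H - mat a \<and>
      (\<forall>B\<in>Bs. (H - mat a) ** B = B ** (H - mat a) \<and> (H - mat a) ** adj B = adj B ** (H - mat a))"
    if "cnj a = a" for a
    using comm commA that
    by (simp add: adj_diff adj_mat herm mat_diff_rdistrib mat_diff_ldistrib mat_comm)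
  define t0 where "t0 = ctrace (H ** \<rho> ** H)"
  define t1 where "t1 = ctrace ((H - mat (-1)) ** \<rho> ** (H - mat (-1)))"
  have e0: "H ** \<rho> ** H = mat t0 ** \<rho>"
    unfolding t0_def by (rule sand) (use herm comm commA in auto)
  have e1: "(H - mat (-1)) ** \<rho> ** (H - mat (-1)) = mat t1 ** \<rho>"
    unfolding t1_def by (rule sand) (use shift_ok[of "-1"] in auto)
  define s where "s = t1 - t0 - 1"
  have HR: "(H ** \<rho> + \<rho> ** H) *v x = s *s (\<rho> *v x)" for x
  proof -
    have "((H - mat (-1)) ** \<rho> ** (H - mat (-1))) *v x = t1 *s (\<rho> *v x)"
      using e1 by (simp add: mat_mult_mv)
    moreover have "((H - mat (-1)) ** \<rho> ** (H - mat (-1))) *v x =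
       (H ** \<rho> ** H) *v x + (H ** \<rho>) *v x + (\<rho> ** H) *v x + \<rho> *v x"
      by (simp add: matrix_vector_mul_assoc[symmetric] matrix_vector_mult_diff_rdistrib
          matrix_vector_mult_diff_distrib mat_mv algebra_simps)
    moreover have "(H ** \<rho> ** H) *v x = t0 *s (\<rho> *v x)" using e0 by (simp add: mat_mult_mv)
    ultimately show ?thesis
      by (simp add: s_def matrix_vector_mult_add_rdistrib vector_sub_rdistrib algebra_simps)
  qed
  have sreal: "cnj s = s"
  proof -
    have HRm: "H ** \<rho> + \<rho> ** H = mat s ** \<rho>"
      by (rule matrix_eqI) (simp add: HR mat_mult_mv)
    hence "adj (H ** \<rho> + \<rho> ** H) = adj (mat s ** \<rho>)" by simp
    hence "\<rho> ** H + H ** \<rho> = \<rho> ** mat (cnj s)" by (simp add: adj_add adj_mult herm rherm adj_mat)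
    hence "mat s ** \<rho> = mat (cnj s) ** \<rho>" using HRm by (simp add: mat_comm add.commute)
    hence "ctrace (mat s ** \<rho>) = ctrace (mat (cnj s) ** \<rho>)" by simp
    thus ?thesis by (simp add: ctrace_mat_mult rtr)
  qed
  define a where "a = s / 2"
  have areal: "cnj a = a" using sreal by (simp add: a_def)
  define G where "G = H - mat a"
  have Gh: "adj G = G" and Gc: "\<forall>B\<in>Bs. G ** B = B ** G \<and> G ** adj B = adj B ** G"
    using shift_ok[OF areal] by (auto simp: G_def)
  define t where "t = ctrace (G ** \<rho> ** G)"
  have e2: "G ** \<rho> ** G = mat t ** \<rho>" unfolding t_def by (rule sand[OF Gh Gc])
  have tpos: "Im t = 0" "0 \<le> Re t" using psd_trace[OF sandwich_psd[OF rpsd Gh]] by (auto simp: t_def)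
  have anti: "G *v (\<rho> *v z) = - (\<rho> *v (G *v z))" for z
  proof -
    have g1: "G *v (\<rho> *v z) = H *v (\<rho> *v z) - a *s (\<rho> *v z)"
      by (simp add: G_def matrix_vector_mult_diff_rdistrib mat_mv)
    have g2: "\<rho> *v (G *v z) = \<rho> *v (H *v z) - a *s (\<rho> *v z)"
      by (simp add: G_def matrix_vector_mult_diff_rdistrib matrix_vector_mult_diff_distrib mat_mv mv_scale)
    have g3: "H *v (\<rho> *v z) + \<rho> *v (H *v z) = s *s (\<rho> *v z)"
      using HR[of z] by (simp add: matrix_vector_mult_add_rdistrib matrix_vector_mul_assoc)
    have aa: "s *s (\<rho> *v z) = a *s (\<rho> *v z) + a *s (\<rho> *v z)"
      by (simp add: a_def vector_sadd_rdistrib[symmetric])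
    have "G *v (\<rho> *v z) + \<rho> *v (G *v z) = 0"
      unfolding g1 g2 using g3 aa by (simp add: algebra_simps)
    thus ?thesis by (simp add: add_eq_0_iff)
  qed
  have GG: "G *v (G *v x) = - (t *s x)" for x
  proof -
    have "G *v (\<rho> *v (G *v x)) = t *s (\<rho> *v x)"
      using e2 by (metis mat_mult_mv matrix_vector_mul_assoc)
    hence "- (\<rho> *v (G *v (G *v x))) = t *s (\<rho> *v x)" using anti by simp
    hence "\<rho> *v (G *v (G *v x) + t *s x) = 0"
      by (simp add: matrix_vector_right_distrib mv_scale add_eq_0_iff)
    hence "G *v (G *v x) + t *s x = 0" by (rule posdef_inj[OF rho(3)])
    thus ?thesis by (simp add: add_eq_0_iff)
  qed
  have Gz: "G *v x = 0" for x
  proof -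
    have "cinner (G *v x) (G *v x) = cinner x (G *v (G *v x))"
      using herm_cinner[OF Gh, of x "G *v x"] by simp
    also have "\<dots> = - (t * cinner x x)" by (simp add: GG cinner_scale_right cinner_neg_right)
    finally have eq: "cinner (G *v x) (G *v x) = - (t * cinner x x)" .
    have "Re (cinner (G *v x) (G *v x)) = - (Re t * Re (cinner x x))"
      using eq tpos cinner_self_Im[of x] by simp
    moreover have "0 \<le> Re t * Re (cinner x x)" using tpos cinner_self_Re_nonneg[of x] by simp
    moreover note cinner_self_Re_nonneg[of "G *v x"] cinner_self_Im[of "G *v x"]
    ultimately have "cinner (G *v x) (G *v x) = 0" by (simp add: complex_eq_iff)
    thus ?thesis by simp
  qed
  have "H = mat a"
  proof (rule matrix_eqI)
    fix x have "G *v x = 0" by (rule Gz)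
    thus "H *v x = mat a *v x" by (simp add: G_def matrix_vector_mult_diff_rdistrib)
  qed
  thus ?thesis by blast
qed


definition clin :: "(complex^'n \<Rightarrow> complex^'n) \<Rightarrow> bool" where
  "clin X \<longleftrightarrow> (\<forall>x y. X (x + y) = X x + X y) \<and> (\<forall>c x. X (c *s x) = c *s X x)"

lemma clin_add: "clin X \<Longrightarrow> X (x + y) = X x + X y" by (simp add: clin_def)
lemma clin_scale: "clin X \<Longrightarrow> X (c *s x) = c *s X x" by (simp add: clin_def)
lemma clin_zero: "clin X \<Longrightarrow> X 0 = 0"
  using clin_scale[of X 0 0] by simp
lemma clin_neg: "clin X \<Longrightarrow> X (- x) = - X x"
  using clin_scale[of X "-1" x] by (simp add: vector_sneg_minus1[symmetric])
lemma clin_diff: "clin X \<Longrightarrow> X (x - y) = X x - X y"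
  using clin_add[of X x "-y"] clin_neg[of X y] by simp
lemma clin_sum:
  assumes "clin X" "finite A"
  shows "X (\<Sum>a\<in>A. f a) = (\<Sum>a\<in>A. X (f a))"
  using assms(2) by (induct A rule: finite_induct) (auto simp: clin_zero[OF assms(1)] clin_add[OF assms(1)])

lemma clin_matrix:
  assumes "clin X"
  shows "matrix X *v x = X x"
proof -
  have "X x = X (\<Sum>j\<in>UNIV. x$j *s axis j 1)" by (simp add: basis_expansion)
  also have "\<dots> = (\<Sum>j\<in>UNIV. x$j *s X (axis j 1))" by (simp add: clin_sum[OF assms] clin_scale[OF assms])
  finally show ?thesis by (simp add: vec_eq_iff matrix_vector_mult_def matrix_def mult.commute)
qed

lemma clin_mv: "clin (\<lambda>x. A *v x)"
  by (simp add: clin_def matrix_vector_right_distrib mv_scale)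

lemma schur:
  assumes iqc: "IQC Bs" and lX: "clin X" and lX': "clin X'"
    and adjX: "\<And>x y. cinner (X x) y = cinner x (X' y)"
    and cX: "\<And>B x. B \<in> Bs \<Longrightarrow> X (B *v x) = B *v X x"
    and cX': "\<And>B x. B \<in> Bs \<Longrightarrow> X' (B *v x) = B *v X' x"
  shows "\<exists>c. \<forall>x. X x = c *s x"
proof -
  define A where "A = matrix X"
  define A' where "A' = matrix X'"
  have Ax: "A *v x = X x" for x by (simp add: A_def clin_matrix[OF lX])
  have A'x: "A' *v x = X' x" for x by (simp add: A'_def clin_matrix[OF lX'])
  have adjA: "adj A = A'"
  proof (rule matrix_eqI, rule cinner_eq_vec)
    fix x y
    have "cinner x (adj A *v y) = cinner (A *v x) y" by (metis cinner_adj adj_adj)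
    thus "cinner x (adj A *v y) = cinner x (A' *v y)" by (simp add: Ax A'x adjX)
  qed
  have cA: "A ** B = B ** A" if "B \<in> Bs" for B
    by (rule matrix_eqI) (simp add: matrix_vector_mul_assoc[symmetric] Ax cX[OF that])
  have cA': "A' ** B = B ** A'" if "B \<in> Bs" for B
    by (rule matrix_eqI) (simp add: matrix_vector_mul_assoc[symmetric] A'x cX'[OF that])
  define H1 where "H1 = A + A'"
  define H2 where "H2 = mat \<i> ** (A - A')"
  have H1x: "H1 *v x = A *v x + A' *v x" for x by (simp add: H1_def matrix_vector_mult_add_rdistrib)
  have H2x: "H2 *v x = \<i> *s (A *v x - A' *v x)" for x
    by (simp add: H2_def mat_mult_mv matrix_vector_mult_diff_rdistrib)
  have adjA': "adj A' = A" using adjA by (metis adj_adj)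
  have h1: "adj H1 = H1" using adjA adjA' by (simp add: H1_def adj_add add.commute)
  have h2: "adj H2 = H2"
  proof (rule matrix_eqI)
    fix x
    have "adj H2 = (A' - A) ** mat (- \<i>)" using adjA adjA' by (simp add: H2_def adj_mult adj_mat adj_diff)
    hence "adj H2 *v x = (- \<i>) *s (A' *v x - A *v x)"
      by (simp add: matrix_vector_mul_assoc[symmetric] mat_mv matrix_vector_mult_diff_rdistrib mv_scale
          vector_ssub_ldistrib mv_neg)
    thus "adj H2 *v x = H2 *v x" by (simp add: H2x vec_eq_iff algebra_simps)
  qed
  have c1: "\<forall>B\<in>Bs. H1 ** B = B ** H1"
  proof
    fix B assume B: "B \<in> Bs"
    show "H1 ** B = B ** H1"
      by (rule matrix_eqI) (simp add: matrix_vector_mul_assoc[symmetric] H1x Ax A'x cX[OF B] cX'[OF B]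
          matrix_vector_right_distrib)
  qed
  have c2: "\<forall>B\<in>Bs. H2 ** B = B ** H2"
  proof
    fix B assume B: "B \<in> Bs"
    show "H2 ** B = B ** H2"
      by (rule matrix_eqI) (simp add: matrix_vector_mul_assoc[symmetric] H2x Ax A'x cX[OF B] cX'[OF B]
          matrix_vector_mult_diff_distrib mv_scale)
  qed
  obtain a where a: "H1 = mat a" using herm_schur[OF iqc h1 c1] by blast
  obtain b where b: "H2 = mat b" using herm_schur[OF iqc h2 c2] by blast
  have "X x = ((a - \<i> * b) / 2) *s x" for x
  proof -
    have e1: "A *v x + A' *v x = a *s x" using H1x[of x] a by (simp add: mat_mv)
    have e2: "\<i> *s (A *v x - A' *v x) = b *s x" using H2x[of x] b by (simp add: mat_mv)
    have "(A *v x) $ k = (a - \<i> * b) / 2 * x $ k" for k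
    proof -
      define u where "u = (A *v x) $ k"
      define w where "w = (A' *v x) $ k"
      have f1: "u + w = a * x $ k" using arg_cong[OF e1, of "\<lambda>v. v $ k"] by (simp add: u_def w_def)
      have f2: "\<i> * (u - w) = b * x $ k" using arg_cong[OF e2, of "\<lambda>v. v $ k"] by (simp add: u_def w_def right_diff_distrib)
      have "(a - \<i> * b) * x $ k = a * x $ k - \<i> * (b * x $ k)" by (simp add: algebra_simps)
      also have "\<dots> = (u + w) - \<i> * (\<i> * (u - w))" using f1 f2 by simp
      also have "\<dots> = 2 * u" by (simp add: algebra_simps)
      finally show ?thesis by (simp add: u_def)
    qed
    hence "A *v x = ((a - \<i> * b) / 2) *s x" by (simp add: vec_eq_iff)
    thus ?thesis by (simp add: Ax)
  qed
  thus ?thesis by blast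
qed


lemma double_mod_odd:
  assumes "odd (p::nat)" "j < p" "(j + j) mod p = 0"
  shows "j = 0"
proof (cases "j + j < p")
  case True thus ?thesis using assms(3) by simp
next
  case False
  hence "(j + j) mod p = (j + j - p) mod p" by (simp add: le_mod_geq)
  moreover have "j + j - p < p" using assms(2) by simp
  ultimately have "j + j = p" using assms(3) False by simp
  thus ?thesis using assms(1) by presburger
qed

lemma odd_shift_par: "odd (p::nat) \<Longrightarrow> b = a + p \<Longrightarrow> a mod 2 = b mod 2 \<Longrightarrow> False"
  by presburger

lemma crt_odd:
  assumes "odd (p::nat)" "r < 2 * p" "s < 2 * p" "r mod p = s mod p" "r mod 2 = s mod 2"
  shows "r = s"
proof -
  have red: "x mod p = (if x < p then x else x - p)" if "x < 2 * p" for x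
  proof (cases "x < p")
    case False
    hence "x mod p = (x - p) mod p" by (simp add: le_mod_geq)
    also have "\<dots> = x - p" using that by simp
    finally show ?thesis using False by simp
  qed simp
  have par: False if "b = a + p" "a mod 2 = b mod 2" for a b :: nat
    using odd_shift_par[OF assms(1) that] .
  have rr: "r mod p = (if r < p then r else r - p)" by (rule red[OF assms(2)])
  have ss: "s mod p = (if s < p then s else s - p)" by (rule red[OF assms(3)])
  show ?thesis
  proof (cases "r < p")
    case r: True
    hence r1: "r mod p = r" using rr by presburger
    show ?thesis
    proof (cases "s < p")
      case True
      hence "s mod p = s" using ss by presburger
      thus ?thesis using r1 assms(4) by linarith
    next
      case False
      hence "s mod p = s - p" using ss by presburger
      hence "s = r + p" using r1 assms(4) False by linarith
      thus ?thesis using par[of s r] assms(5) by blast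
    qed
  next
    case r: False
    hence r1: "r mod p = r - p" using rr by presburger
    show ?thesis
    proof (cases "s < p")
      case True
      hence "s mod p = s" using ss by presburger
      hence "r = s + p" using r1 assms(4) r by linarith
      thus ?thesis using par[of r s] assms(5) by auto
    next
      case False
      hence "s mod p = s - p" using ss by presburger
      thus ?thesis using r1 assms(4) r False by linarith
    qed
  qed
qed

lemma sum_split_add: "(\<Sum>r<p + q. f r) = (\<Sum>r<p. f r) + (\<Sum>r<q. f (r + (p::nat)))"
  by (induct q) (auto simp: add.commute add.left_commute)

section \<open>The odd case\<close>

locale oddsetting =
  fixes Bs :: "(complex^'n^'n) set" and U V :: "nat \<Rightarrow> (complex^'n) set" and p :: nat
  assumes iqc: "IQC Bs"
    and odU: "orth_decomp p U" and cycU: "\<forall>i<p. \<forall>B\<in>Bs. \<forall>u\<in>U i. B *v u \<in> U (Suc i mod p)"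
    and odV: "orth_decomp 2 V" and cycV: "\<forall>j<2. \<forall>B\<in>Bs. \<forall>v\<in>V j. B *v v \<in> V (Suc j mod 2)"
    and oddp: "odd p"
begin

lemma p_pos: "0 < p" using oddp by presburger

definition pi :: "nat \<Rightarrow> complex^'n \<Rightarrow> complex^'n" where
  "pi k x = dcomp p U (k mod p) x"

definition sg :: "nat \<Rightarrow> complex^'n \<Rightarrow> complex^'n" where
  "sg j x = dcomp 2 V j x"

definition Y :: "complex^'n \<Rightarrow> complex^'n" where
  "Y x = sg 0 x - sg 1 x"

definition NN :: "nat \<Rightarrow> nat \<Rightarrow> complex^'n \<Rightarrow> complex^'n" where
  "NN a b x = (\<Sum>i<p. pi (i + a) (Y (pi (i + b) x)))"

lemma modp: "k mod p < p" using p_pos by simp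

lemma pi_in: "pi k x \<in> U (k mod p)"
  unfolding pi_def by (rule dcomp_in[OF odU modp])

lemma pi_sum: "(\<Sum>k<p. pi k x) = x"
  unfolding pi_def using dcomp_sum[OF odU, of x] by simp

lemma pi_lin: "clin (pi k)"
  unfolding clin_def pi_def by (simp add: dcomp_add[OF odU modp] dcomp_scale[OF odU modp])

lemma pi_periodic: "pi (k + p) = pi k"
  by (simp add: pi_def fun_eq_iff)

lemma pi_shift: "B \<in> Bs \<Longrightarrow> pi (Suc k) (B *v x) = B *v pi k x"
proof -
  assume B: "B \<in> Bs"
  have "dcomp p U (Suc (k mod p) mod p) (B *v x) = B *v dcomp p U (k mod p) x"
    by (rule dcomp_shift[OF odU _ modp]) (use cycU B in blast)
  thus ?thesis by (simp add: pi_def mod_Suc_eq)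
qed

lemma pi_selfadj: "cinner (pi k x) y = cinner x (pi k y)"
  unfolding pi_def by (rule dcomp_selfadj[OF odU modp])

lemma pi_elem: "i < p \<Longrightarrow> u \<in> U i \<Longrightarrow> pi k u = (if k mod p = i then u else 0)"
  unfolding pi_def by (rule dcomp_elem[OF odU _ _ modp])

lemma sg_lin: "j < 2 \<Longrightarrow> clin (sg j)"
  unfolding clin_def sg_def by (simp add: dcomp_add[OF odV] dcomp_scale[OF odV])

lemma sg_sum: "sg 0 x + sg 1 x = x"
  using dcomp_sum[OF odV, of x] by (simp add: sg_def sum2)

lemma sg_in: "j < 2 \<Longrightarrow> sg j x \<in> V j"
  unfolding sg_def by (rule dcomp_in[OF odV])

lemma sg_shift0:
  assumes B: "B \<in> Bs" shows "sg 1 (B *v x) = B *v sg 0 x"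
proof -
  have cyc: "\<forall>i<2. \<forall>u\<in>V i. B *v u \<in> V (Suc i mod 2)" using cycV B by blast
  have "dcomp 2 V (Suc 0 mod 2) (B *v x) = B *v dcomp 2 V 0 x" by (rule dcomp_shift[OF odV cyc]) simp
  thus ?thesis by (simp add: sg_def)
qed

lemma sg_shift1:
  assumes B: "B \<in> Bs" shows "sg 0 (B *v x) = B *v sg 1 x"
proof -
  have cyc: "\<forall>i<2. \<forall>u\<in>V i. B *v u \<in> V (Suc i mod 2)" using cycV B by blast
  have "dcomp 2 V (Suc 1 mod 2) (B *v x) = B *v dcomp 2 V 1 x" by (rule dcomp_shift[OF odV cyc]) simp
  thus ?thesis by (simp add: sg_def)
qed

lemma Y_lin: "clin Y"
  using sg_lin[of 0] sg_lin[of 1] unfolding clin_def Y_def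
  by (simp add: vector_ssub_ldistrib)

lemma Y_anti:
  assumes B: "B \<in> Bs" shows "Y (B *v x) = - (B *v Y x)"
proof -
  have "Y (B *v x) = sg 0 (B *v x) - sg 1 (B *v x)" by (simp only: Y_def)
  also have "\<dots> = B *v sg 1 x - B *v sg 0 x" by (simp only: sg_shift0[OF B] sg_shift1[OF B])
  also have "\<dots> = - (B *v Y x)" by (simp add: Y_def matrix_vector_mult_diff_distrib)
  finally show ?thesis .
qed

lemma Y_selfadj: "cinner (Y x) y = cinner x (Y y)"
  by (simp add: Y_def cinner_diff_left cinner_diff_right sg_def dcomp_selfadj[OF odV])

lemma Y_Y: "Y (Y x) = x"
proof -
  have a: "sg 0 (sg 0 x) = sg 0 x" "sg 1 (sg 1 x) = sg 1 x" "sg 0 (sg 1 x) = 0" "sg 1 (sg 0 x) = 0"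
    by (simp_all add: sg_def dcomp_idem[OF odV] dcomp_cross[OF odV])
  have "Y (Y x) = sg 0 (sg 0 x - sg 1 x) - sg 1 (sg 0 x - sg 1 x)" by (simp add: Y_def)
  also have "\<dots> = sg 0 x + sg 1 x"
    using a by (simp add: sg_def dcomp_diff[OF odV])
  finally show ?thesis using sg_sum[of x] by simp
qed

lemma NN_lin: "clin (NN a b)"
  using pi_lin Y_lin unfolding clin_def NN_def
  by (simp add: sum.distrib scale_sum)

lemma NN_anti:
  assumes B: "B \<in> Bs"
  shows "NN a b (B *v x) = - (B *v NN a b x)"
proof -
  define h where "h k = pi (k + a) (Y (pi (k + b) x))" for k
  have hp: "h (k + p) = h k" for k
    using pi_periodic[of "k + a"] pi_periodic[of "k + b"] by (simp add: h_def add_ac)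
  have step: "pi (i + a) (Y (pi (i + b) (B *v x))) = - (B *v h (i + (p - 1)))" for i
  proof -
    have e: "i + b + p = Suc (i + (p - 1) + b)" using p_pos by simp
    have "pi (i + b) (B *v x) = pi (i + b + p) (B *v x)" by (simp add: pi_periodic)
    also have "\<dots> = B *v pi (i + (p - 1) + b) x" unfolding e by (rule pi_shift[OF B])
    finally have 1: "pi (i + b) (B *v x) = B *v pi (i + (p - 1) + b) x" .
    have e2: "i + a + p = Suc (i + (p - 1) + a)" using p_pos by simp
    have "pi (i + a) (Y (pi (i + b) (B *v x))) = pi (i + a) (- (B *v Y (pi (i + (p - 1) + b) x)))"
      by (simp add: 1 Y_anti[OF B])
    also have "\<dots> = - pi (i + a) (B *v Y (pi (i + (p - 1) + b) x))" by (simp add: clin_neg[OF pi_lin])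
    also have "pi (i + a) (B *v Y (pi (i + (p - 1) + b) x)) = pi (i + a + p) (B *v Y (pi (i + (p - 1) + b) x))"
      by (simp add: pi_periodic)
    also have "\<dots> = B *v pi (i + (p - 1) + a) (Y (pi (i + (p - 1) + b) x))"
      unfolding e2 by (rule pi_shift[OF B])
    finally show ?thesis by (simp add: h_def)
  qed
  have "NN a b (B *v x) = (\<Sum>i<p. - (B *v h (i + (p - 1))))" by (simp add: NN_def step)
  also have "\<dots> = - (B *v (\<Sum>i<p. h (i + (p - 1))))" by (simp add: sum_negf mv_sum)
  also have "(\<Sum>i<p. h (i + (p - 1))) = (\<Sum>i<p. h i)" by (rule sum_periodic_shift[where h = h and p = p, OF hp])
  finally show ?thesis by (simp add: NN_def h_def)
qed

lemma NN_adj: "cinner (NN a b x) y = cinner x (NN b a y)"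
proof -
  have "cinner (NN a b x) y = (\<Sum>i<p. cinner (pi (i + a) (Y (pi (i + b) x))) y)"
    by (simp add: NN_def cinner_sum_left)
  also have "\<dots> = (\<Sum>i<p. cinner x (pi (i + b) (Y (pi (i + a) y))))"
    by (simp add: pi_selfadj Y_selfadj)
  also have "\<dots> = cinner x (NN b a y)" by (simp add: NN_def cinner_sum_right)
  finally show ?thesis .
qed

lemma NN_elem:
  assumes i: "i < p" and u: "u \<in> U i"
  shows "NN k 0 u = pi (i + k) (Y u)"
proof -
  have "NN k 0 u = (\<Sum>l<p. pi (l + k) (Y (pi l u)))" by (simp add: NN_def)
  also have "\<dots> = pi (i + k) (Y (pi i u))"
  proof (rule sum_single)
    fix l assume "l \<in> {..<p}" "l \<noteq> i"
    thus "pi (l + k) (Y (pi l u)) = 0"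
      using pi_elem[OF i u, of l] clin_zero[OF Y_lin] clin_zero[OF pi_lin] by simp
  qed (use i in auto)
  also have "pi i u = u" using pi_elem[OF i u, of i] i by simp
  finally show ?thesis .
qed

lemma NN_scalar: "\<exists>c. \<forall>x. NN k 0 x = c *s Y x"
proof -
  have "\<exists>c. \<forall>x. (NN k 0 \<circ> Y) x = c *s x"
  proof (rule schur[OF iqc, where X' = "Y \<circ> NN 0 k"])
    show "clin (NN k 0 \<circ> Y)" using NN_lin Y_lin by (simp add: clin_def)
    show "clin (Y \<circ> NN 0 k)" using NN_lin Y_lin by (simp add: clin_def)
    show "cinner ((NN k 0 \<circ> Y) x) y = cinner x ((Y \<circ> NN 0 k) y)" for x y
      by (simp add: NN_adj Y_selfadj)
    show "(NN k 0 \<circ> Y) (B *v x) = B *v (NN k 0 \<circ> Y) x" if "B \<in> Bs" for B x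
      using that by (simp add: Y_anti NN_anti clin_neg[OF NN_lin])
    show "(Y \<circ> NN 0 k) (B *v x) = B *v (Y \<circ> NN 0 k) x" if "B \<in> Bs" for B x
      using that by (simp add: Y_anti NN_anti clin_neg[OF Y_lin])
  qed
  then obtain c where c: "\<And>x. NN k 0 (Y x) = c *s x" by auto
  have "NN k 0 x = c *s Y x" for x using c[of "Y x"] by (simp add: Y_Y)
  thus ?thesis by blast
qed


lemma Y_zero: "Y 0 = 0" by (rule clin_zero[OF Y_lin])

lemma Y_U:
  assumes i: "i < p" and u: "u \<in> U i"
  shows "Y u \<in> U i"
proof -
  obtain u0 where u0: "u0 \<in> U 0" "u0 \<noteq> 0" using od_nz[OF odU p_pos] by blast
  have Yu0: "Y u0 \<noteq> 0"
  proof
    assume "Y u0 = 0"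
    hence "Y (Y u0) = 0" by (simp add: Y_zero)
    thus False using u0 by (simp add: Y_Y)
  qed
  obtain j where j: "j < p" "pi j (Y u0) \<noteq> 0"
  proof -
    have "\<exists>j<p. pi j (Y u0) \<noteq> 0"
    proof (rule ccontr)
      assume "\<not> ?thesis"
      hence "(\<Sum>k<p. pi k (Y u0)) = 0" by (intro sum.neutral) auto
      thus False using pi_sum[of "Y u0"] Yu0 by simp
    qed
    thus ?thesis using that by blast
  qed
  obtain c where c: "\<And>x. NN j 0 x = c *s Y x" using NN_scalar[of j] by blast
  have "NN j 0 u0 = pi (0 + j) (Y u0)" by (rule NN_elem[OF p_pos u0(1)])
  hence cne: "c \<noteq> 0" using j(2) c[of u0] by auto
  have gen: "Y w \<in> U ((l + j) mod p)" if "l < p" "w \<in> U l" for l w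
  proof -
    have "c *s Y w = pi (l + j) (Y w)" using c[of w] NN_elem[OF that, of j] by simp
    hence "c *s Y w \<in> U ((l + j) mod p)" using pi_in by metis
    hence "(1 / c) *s (c *s Y w) \<in> U ((l + j) mod p)" by (rule csub_scale[OF od_sub[OF odU modp]])
    thus ?thesis using cne by (simp add: vector_smult_assoc)
  qed
  have jj: "(j + j) mod p = 0"
  proof (rule ccontr)
    assume ne: "(j + j) mod p \<noteq> 0"
    have "Y u0 \<in> U j" using gen[OF p_pos u0(1)] j(1) by simp
    hence "Y (Y u0) \<in> U ((j + j) mod p)" using gen[OF j(1)] by blast
    hence "u0 \<in> U ((j + j) mod p)" by (simp add: Y_Y)
    hence "cinner u0 u0 = 0" using od_orth[OF odU p_pos modp ne[symmetric] u0(1)] by blast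
    thus False using u0(2) by simp
  qed
  have "j = 0" by (rule double_mod_odd[OF oddp j(1) jj])
  thus ?thesis using gen[OF i u] i by simp
qed

lemma sg_U:
  assumes i: "i < p" and u: "u \<in> U i"
  shows "sg 0 u \<in> U i" "sg 1 u \<in> U i"
proof -
  have s: "u = sg 0 u + sg 1 u" using sg_sum[of u] by simp
  have y: "Y u = sg 0 u - sg 1 u" by (simp add: Y_def)
  have e0: "sg 0 u = (1/2) *s (u + Y u)"
    by (subst s, subst y, simp add: vec_eq_iff field_simps)
  have e1: "sg 1 u = (1/2) *s (u - Y u)"
    by (subst s, subst y, simp add: vec_eq_iff field_simps)
  have sub: "csubspace (U i)" by (rule od_sub[OF odU i])
  show "sg 0 u \<in> U i" unfolding e0 using Y_U[OF i u] u sub by (intro csub_scale csub_add)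
  show "sg 1 u \<in> U i" unfolding e1 using Y_U[OF i u] u sub by (intro csub_scale csub_diff)
qed

definition W :: "nat \<Rightarrow> (complex^'n) set" where
  "W r = U (r mod p) \<inter> V (r mod 2)"

lemma W_sub: "csubspace (W r)"
  using od_sub[OF odU modp, of r] od_sub[OF odV, of "r mod 2"]
  unfolding W_def csubspace_def by auto

lemma W_shift:
  assumes w: "w \<in> W r" and B: "B \<in> Bs"
  shows "B *v w \<in> W (Suc r)"
proof -
  have "B *v w \<in> U (Suc (r mod p) mod p)" using cycU modp w B by (auto simp: W_def)
  moreover have "B *v w \<in> V (Suc (r mod 2) mod 2)" using cycV w B by (auto simp: W_def)
  ultimately show ?thesis by (simp add: W_def mod_Suc_eq)
qed

lemma W_mod: "W (r mod (2 * p)) = W r"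
proof -
  have "(r mod (2 * p)) mod p = r mod p" by (rule mod_mod_cancel) simp
  moreover have "(r mod (2 * p)) mod 2 = r mod 2" by (rule mod_mod_cancel) simp
  ultimately show ?thesis by (simp add: W_def)
qed

lemma W_nz: "\<exists>w\<in>W r. w \<noteq> 0"
proof -
  have fin: "finite Bs" and kr: "(\<Sum>B\<in>Bs. adj B ** B) = mat 1" using iqc by (auto simp: IQC_def)
  obtain u0 where u0: "u0 \<in> U 0" "u0 \<noteq> 0" using od_nz[OF odU p_pos] by blast
  have p1: "p mod 2 = 1" using oddp by presburger
  have start: "\<exists>r0\<le>p. \<exists>w\<in>W r0. w \<noteq> 0"
  proof (cases "sg 0 u0 = 0")
    case True
    hence "sg 1 u0 \<noteq> 0" using sg_sum[of u0] u0(2) by simp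
    moreover have "sg 1 u0 \<in> W p" using sg_U(2)[OF p_pos u0(1)] sg_in[of 1] p1 by (simp add: W_def)
    ultimately show ?thesis by blast
  next
    case False
    moreover have "sg 0 u0 \<in> W 0" using sg_U(1)[OF p_pos u0(1)] sg_in[of 0] by (simp add: W_def)
    ultimately show ?thesis by blast
  qed
  then obtain r0 where r0: "r0 \<le> p" "\<exists>w\<in>W r0. w \<noteq> 0" by blast
  have prp: "\<exists>w\<in>W (r0 + t). w \<noteq> 0" for t
  proof (induct t)
    case 0 thus ?case using r0 by simp
  next
    case (Suc t)
    then obtain w where w: "w \<in> W (r0 + t)" "w \<noteq> 0" by blast
    obtain B where B: "B \<in> Bs" "B *v w \<noteq> 0" using kraus_nonzero[OF fin kr w(2)] by blast
    have "B *v w \<in> W (Suc (r0 + t))" by (rule W_shift[OF w(1) B(1)])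
    thus ?case using B(2) by auto
  qed
  have "r + 2 * p = r0 + (r + 2 * p - r0)" using r0(1) by simp
  hence "\<exists>w\<in>W (r + 2 * p). w \<noteq> 0" using prp[of "r + 2 * p - r0"] by simp
  moreover have "W (r + 2 * p) = W r" using W_mod[of "r + 2 * p"] W_mod[of r] by simp
  ultimately show ?thesis by simp
qed

lemma cyc2p: "cyclic_decomp Bs (2 * p)"
proof -
  have od: "orth_decomp (2 * p) W"
    unfolding orth_decomp_def
  proof (intro conjI allI impI ballI)
    fix i assume "i < 2 * p"
    show "csubspace (W i)" by (rule W_sub)
    show "W i \<noteq> {0}" using W_nz[of i] by blast
  next
    fix i j u v assume ij: "i < 2 * p" "j < 2 * p" "i \<noteq> j" and u: "u \<in> W i" and v: "v \<in> W j"
    show "cinner u v = 0"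
    proof (cases "i mod p = j mod p")
      case True
      hence "i mod 2 \<noteq> j mod 2" using crt_odd[OF oddp ij(1,2)] ij(3) by blast
      thus ?thesis using od_orth[OF odV _ _ _, of "i mod 2" "j mod 2" u v] u v by (simp add: W_def)
    next
      case False
      thus ?thesis using od_orth[OF odU modp modp False, of u v] u v by (simp add: W_def)
    qed
  next
    fix x
    define u where "u r = sg (r mod 2) (pi r x)" for r
    have uin: "u r \<in> W r" for r
    proof -
      have "r mod 2 = 0 \<or> r mod 2 = 1" by presburger
      moreover have "pi r x \<in> U (r mod p)" by (rule pi_in)
      ultimately have "u r \<in> U (r mod p)" using sg_U[OF modp] by (auto simp: u_def)
      moreover have "u r \<in> V (r mod 2)" unfolding u_def by (rule sg_in) simp
      ultimately show ?thesis by (simp add: W_def)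
    qed
    have pair: "u r + u (r + p) = pi r x" for r
    proof -
      have pp: "pi (r + p) x = pi r x" by (simp add: pi_periodic)
      have "r mod 2 = 0 \<and> (r + p) mod 2 = 1 \<or> r mod 2 = 1 \<and> (r + p) mod 2 = 0"
        using oddp by presburger
      moreover have "sg 1 (pi r x) + sg 0 (pi r x) = pi r x" using sg_sum[of "pi r x"] by (simp add: add.commute)
      ultimately show ?thesis using sg_sum[of "pi r x"] by (auto simp: u_def pp)
    qed
    have "(\<Sum>r<2 * p. u r) = (\<Sum>r<p + p. u r)" by (simp add: mult_2)
    also have "\<dots> = (\<Sum>r<p. u r) + (\<Sum>r<p. u (r + p))" by (rule sum_split_add)
    also have "\<dots> = (\<Sum>r<p. pi r x)" by (simp add: sum.distrib[symmetric] pair)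
    also have "\<dots> = x" by (rule pi_sum)
    finally show "\<exists>u. (\<forall>i<2 * p. u i \<in> W i) \<and> x = (\<Sum>i<2 * p. u i)" using uin by metis
  qed
  have "\<forall>i<2 * p. \<forall>B\<in>Bs. \<forall>w\<in>W i. B *v w \<in> W (Suc i mod (2 * p))"
    using W_shift W_mod by simp
  thus ?thesis using od unfolding cyclic_decomp_def by blast
qed

end

theorem lemma11p4:
  fixes Bs :: "(complex^'n^'n) set"
  assumes "IQC Bs"
  shows "isotropic_2_decomp Bs \<longleftrightarrow> even (period Bs)"
proof
  assume iso: "isotropic_2_decomp Bs"
  then obtain V where odV: "orth_decomp 2 V"
    and isoV: "\<forall>i<2. \<forall>u\<in>V i. \<forall>u'\<in>V i. \<forall>B\<in>Bs. cinner u (B *v u') = 0"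
    unfolding isotropic_2_decomp_def by blast
  have cycV: "\<forall>j<2. \<forall>B\<in>Bs. \<forall>v\<in>V j. B *v v \<in> V (Suc j mod 2)" by (rule iso_cyclic[OF odV isoV])
  obtain U where odU: "orth_decomp (period Bs) U"
    and cycU: "\<forall>i<period Bs. \<forall>B\<in>Bs. \<forall>u\<in>U i. B *v u \<in> U (Suc i mod period Bs)"
    using period_cyclic[of Bs] unfolding cyclic_decomp_def by blast
  show "even (period Bs)"
  proof (rule ccontr)
    assume "odd (period Bs)"
    then interpret oddsetting Bs U V "period Bs"
      using assms odU cycU odV cycV by unfold_locales
    have "2 * period Bs \<le> period Bs" by (rule period_greatest[OF cyc2p])
    thus False using period_pos[of Bs] by simp
  qed
next
  assume ev: "even (period Bs)"
  obtain U where odU: "orth_decomp (period Bs) U"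
    and cycU: "\<forall>i<period Bs. \<forall>B\<in>Bs. \<forall>u\<in>U i. B *v u \<in> U (Suc i mod period Bs)"
    using period_cyclic[of Bs] unfolding cyclic_decomp_def by blast
  have "2 \<le> period Bs" using ev period_pos[of Bs] by presburger
  thus "isotropic_2_decomp Bs" by (rule even_iso[OF odU cycU ev])
qed

end
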